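(* Let $\mathcal C$ be a class of Baire class 1 functions on compact Polish spaces which contains all functions that are differences of bounded semi-continuous functions. Let $T$ be a complete theory. Then $T$ is stable if and only if $T$ has NIP and $T$ is $\mathcal C$.
   Context: For a formula $\phi(x,y)$ and a countable sequence $(a_i:i<\omega)$, the functions $\phi(a_i,y)$ are regarded as continuous $\{0,1\}$-valued functions on the compact Polish space $S_{\tilde\phi}(\{a_i\})$ of complete $\tilde\phi$-types over $\{a_i:i<\omega\}$ ($\tilde\phi(y,x)=\phi(x,y)$), sending $q$ to $1$ iff $\phi(a_i,y)\in q$. $T$ is $\mathcal C$ means: for every formula $\phi(x,y)$ and every infinite sequence $(a_i:i<\omega)$ in the monster model, if $(\phi(a_i,y):i<\omega)$ converges pointwise to a function in $\mathcal C$, then there is no infinite sequence $(b_j:j<\omega)$ such that $\phi(a_i,b_j)$ holds iff $i<j$. A function is Baire class 1 if it is a pointwise limit of continuous functions; it is DBSC if it equals $F_1-F_2$ for bounded semi-continuous $F_1,F_2$. $T$ is stable if no formula has the order property (no $(a_i),(b_j)$ with $\phi(a_i,b_j)\iff i<j$); $T$ has NIP if no formula $\phi(x,y)$ admits $(a_i:i<\omega)$ such that for every $S\subseteq\omega$ some $b$ satisfies $\phi(a_i,b)\iff i\in S$. *)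

theory Defs
  imports "HOL-Analysis.Analysis"
begin

text \<open>Terms and formulas over function symbols of type 'f and relation symbols of
type 'r (symbols may be used with any number of arguments, i.e. each pair
(symbol, arity) counts as a separate symbol).\<close>

datatype 'f trm = Var nat | Fn 'f "'f trm list"

datatype ('f, 'r) fm =
    FF
  | Eq "'f trm" "'f trm"
  | Rl 'r "'f trm list"
  | Neg "('f, 'r) fm"
  | Conj "('f, 'r) fm" "('f, 'r) fm"
  | Ex nat "('f, 'r) fm"

text \<open>A structure with universe the whole type 'm: interpretations of the
function and relation symbols.\<close>

record ('m, 'f, 'r) struc =
  fn_int :: "'f \<Rightarrow> 'm list \<Rightarrow> 'm"
  rl_int :: "'r \<Rightarrow> 'm list \<Rightarrow> bool"

fun evalt :: "('m, 'f, 'r) struc \<Rightarrow> (nat \<Rightarrow> 'm) \<Rightarrow> 'f trm \<Rightarrow> 'm" where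
  "evalt M e (Var v) = e v"
| "evalt M e (Fn f ts) = fn_int M f (map (evalt M e) ts)"

fun fvt :: "'f trm \<Rightarrow> nat set" where
  "fvt (Var v) = {v}"
| "fvt (Fn f ts) = (\<Union>t\<in>set ts. fvt t)"

primrec sat :: "('m, 'f, 'r) struc \<Rightarrow> (nat \<Rightarrow> 'm) \<Rightarrow> ('f, 'r) fm \<Rightarrow> bool" where
  "sat M e FF = False"
| "sat M e (Eq s t) = (evalt M e s = evalt M e t)"
| "sat M e (Rl r ts) = rl_int M r (map (evalt M e) ts)"
| "sat M e (Neg \<phi>) = (\<not> sat M e \<phi>)"
| "sat M e (Conj \<phi> \<psi>) = (sat M e \<phi> \<and> sat M e \<psi>)"
| "sat M e (Ex v \<phi>) = (\<exists>m. sat M (e(v := m)) \<phi>)"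

primrec fv :: "('f, 'r) fm \<Rightarrow> nat set" where
  "fv FF = {}"
| "fv (Eq s t) = fvt s \<union> fvt t"
| "fv (Rl r ts) = (\<Union>t\<in>set ts. fvt t)"
| "fv (Neg \<phi>) = fv \<phi>"
| "fv (Conj \<phi> \<psi>) = fv \<phi> \<union> fv \<psi>"
| "fv (Ex v \<phi>) = fv \<phi> - {v}"

definition env :: "'m list \<Rightarrow> nat \<Rightarrow> 'm" where
  "env xs v = (if v < length xs then xs ! v else undefined)"

text \<open>A partitioned formula \<phi>(x,y) with x = (v_0..v_{n-1}) and y = (v_n..v_{n+k-1}).\<close>
definition pformula :: "('f, 'r) fm \<Rightarrow> nat \<Rightarrow> nat \<Rightarrow> bool" where
  "pformula \<phi> n k \<longleftrightarrow> fv \<phi> \<subseteq> {..<n + k}"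

definition holds :: "('m, 'f, 'r) struc \<Rightarrow> ('f, 'r) fm \<Rightarrow> 'm list \<Rightarrow> 'm list \<Rightarrow> bool" where
  "holds M \<phi> a b \<longleftrightarrow> sat M (env (a @ b)) \<phi>"

text \<open>A formula with parameters in k free variables is a pair (\<psi>, c) with \<psi> having
free variables among v_0..v_{k+length c - 1}; it is satisfied by the k-tuple b iff
\<psi>(b, c) holds.\<close>

definition aleph1_saturated :: "('m, 'f, 'r) struc \<Rightarrow> bool" where
  "aleph1_saturated M \<longleftrightarrow>
     (\<forall>(k::nat) (p :: (('f, 'r) fm \<times> 'm list) set).
        (\<forall>(\<psi>, c)\<in>p. fv \<psi> \<subseteq> {..<k + length c}) \<longrightarrow>
        countable (\<Union>(\<psi>, c)\<in>p. set c) \<longrightarrow>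
        (\<forall>F. finite F \<longrightarrow> F \<subseteq> p \<longrightarrow>
              (\<exists>b. length b = k \<and> (\<forall>(\<psi>, c)\<in>F. holds M \<psi> b c))) \<longrightarrow>
        (\<exists>b. length b = k \<and> (\<forall>(\<psi>, c)\<in>p. holds M \<psi> b c)))"

definition order_property :: "('m, 'f, 'r) struc \<Rightarrow> ('f, 'r) fm \<Rightarrow> nat \<Rightarrow> nat \<Rightarrow> bool" where
  "order_property M \<phi> n k \<longleftrightarrow>
     (\<exists>(a :: nat \<Rightarrow> 'm list) (b :: nat \<Rightarrow> 'm list).
        (\<forall>i. length (a i) = n) \<and> (\<forall>j. length (b j) = k) \<and>
        (\<forall>i j. holds M \<phi> (a i) (b j) \<longleftrightarrow> i < j))"

definition stable :: "('m, 'f, 'r) struc \<Rightarrow> bool" where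
  "stable M \<longleftrightarrow> (\<forall>\<phi> n k. pformula \<phi> n k \<longrightarrow> \<not> order_property M \<phi> n k)"

definition NIP :: "('m, 'f, 'r) struc \<Rightarrow> bool" where
  "NIP M \<longleftrightarrow> (\<forall>\<phi> n k. pformula \<phi> n k \<longrightarrow>
     \<not> (\<exists>a :: nat \<Rightarrow> 'm list. (\<forall>i. length (a i) = n) \<and>
          (\<forall>S :: nat set. \<exists>b. length b = k \<and> (\<forall>i. holds M \<phi> (a i) b \<longleftrightarrow> i \<in> S))))"

definition cantor :: "(nat \<Rightarrow> bool) topology" where
  "cantor = product_topology (\<lambda>_. discrete_topology UNIV) UNIV"

text \<open>The space S_{\<phi>~}({a_i}) of complete \<phi>~-types over {a_i : i < omega}: a complete
\<phi>~-type q is represented by the function i \<mapsto> [\<phi>(a_i,y) \<in> q]; it is consistent iff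
each finite part is realized (in the aleph_1-saturated monster). Topologised as a
subspace of Cantor space (this is the Stone topology).\<close>
definition type_space :: "('m, 'f, 'r) struc \<Rightarrow> ('f, 'r) fm \<Rightarrow> nat \<Rightarrow> (nat \<Rightarrow> 'm list) \<Rightarrow> (nat \<Rightarrow> bool) set" where
  "type_space M \<phi> k a =
     {q. \<forall>N. \<exists>b. length b = k \<and> (\<forall>i<N. holds M \<phi> (a i) b \<longleftrightarrow> q i)}"

definition type_space_top :: "('m, 'f, 'r) struc \<Rightarrow> ('f, 'r) fm \<Rightarrow> nat \<Rightarrow> (nat \<Rightarrow> 'm list) \<Rightarrow> (nat \<Rightarrow> bool) topology" where
  "type_space_top M \<phi> k a = subtopology cantor (type_space M \<phi> k a)"

definition compact_Polish :: "'a topology \<Rightarrow> bool" where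
  "compact_Polish X \<longleftrightarrow> compact_space X \<and> completely_metrizable_space X \<and> separable_space X"

definition Baire1 :: "'a topology \<Rightarrow> ('a \<Rightarrow> real) \<Rightarrow> bool" where
  "Baire1 X f \<longleftrightarrow> (\<exists>fs :: nat \<Rightarrow> 'a \<Rightarrow> real. (\<forall>n. continuous_map X euclideanreal (fs n)) \<and>
       (\<forall>x\<in>topspace X. (\<lambda>n. fs n x) \<longlonglongrightarrow> f x))"

definition lower_semicont :: "'a topology \<Rightarrow> ('a \<Rightarrow> real) \<Rightarrow> bool" where
  "lower_semicont X f \<longleftrightarrow> (\<forall>t. openin X {x\<in>topspace X. t < f x})"

definition upper_semicont :: "'a topology \<Rightarrow> ('a \<Rightarrow> real) \<Rightarrow> bool" where
  "upper_semicont X f \<longleftrightarrow> (\<forall>t. openin X {x\<in>topspace X. f x < t})"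

definition bounded_semicont :: "'a topology \<Rightarrow> ('a \<Rightarrow> real) \<Rightarrow> bool" where
  "bounded_semicont X f \<longleftrightarrow> (lower_semicont X f \<or> upper_semicont X f) \<and>
      (\<exists>B. \<forall>x\<in>topspace X. \<bar>f x\<bar> \<le> B)"

definition DBSC :: "'a topology \<Rightarrow> ('a \<Rightarrow> real) \<Rightarrow> bool" where
  "DBSC X f \<longleftrightarrow> (\<exists>F1 F2. bounded_semicont X F1 \<and> bounded_semicont X F2 \<and>
      (\<forall>x\<in>topspace X. f x = F1 x - F2 x))"

definition is_class :: "((nat \<Rightarrow> bool) topology \<Rightarrow> ((nat \<Rightarrow> bool) \<Rightarrow> real) \<Rightarrow> bool) \<Rightarrow> ('m, 'f, 'r) struc \<Rightarrow> bool" where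
  "is_class \<C> M \<longleftrightarrow> (\<forall>\<phi> n k (a :: nat \<Rightarrow> 'm list). pformula \<phi> n k \<longrightarrow> (\<forall>i. length (a i) = n) \<longrightarrow>
      (\<exists>g. (\<forall>q\<in>type_space M \<phi> k a. (\<lambda>i. if q i then 1 else 0) \<longlonglongrightarrow> g q) \<and>
           \<C> (type_space_top M \<phi> k a) g) \<longrightarrow>
      \<not> (\<exists>b :: nat \<Rightarrow> 'm list. (\<forall>j. length (b j) = k) \<and>
            (\<forall>i j. holds M \<phi> (a i) (b j) \<longleftrightarrow> i < j)))"

end

theory Submission
  imports Defs "HOL-Library.Ramsey"
begin


fun rent :: "(nat \<Rightarrow> nat) \<Rightarrow> 'f trm \<Rightarrow> 'f trm" where
  "rent f (Var v) = Var (f v)"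
| "rent f (Fn g ts) = Fn g (map (rent f) ts)"

primrec renf :: "(nat \<Rightarrow> nat) \<Rightarrow> ('f, 'r) fm \<Rightarrow> ('f, 'r) fm" where
  "renf f FF = FF"
| "renf f (Eq s t) = Eq (rent f s) (rent f t)"
| "renf f (Rl r ts) = Rl r (map (rent f) ts)"
| "renf f (Neg \<phi>) = Neg (renf f \<phi>)"
| "renf f (Conj \<phi> \<psi>) = Conj (renf f \<phi>) (renf f \<psi>)"
| "renf f (Ex v \<phi>) = Ex (f v) (renf f \<phi>)"

lemma evalt_rent: "evalt M e (rent f t) = evalt M (e \<circ> f) t"
  by (induction t) (auto cong: map_cong)

lemma fvt_rent: "fvt (rent f t) = f ` fvt t"
  by (induction t) auto

lemma sat_renf: "inj f \<Longrightarrow> sat M e (renf f \<phi>) = sat M (e \<circ> f) \<phi>"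
proof (induction \<phi> arbitrary: e)
  case (Ex v \<phi>)
  have eq: "\<And>m. (e(f v := m)) \<circ> f = (e \<circ> f)(v := m)"
    using Ex.prems by (auto simp: fun_eq_iff inj_eq)
  have "sat M e (renf f (Ex v \<phi>)) = (\<exists>m. sat M (e(f v:=m)) (renf f \<phi>))" by simp
  also have "\<dots> = (\<exists>m. sat M ((e(f v:=m)) \<circ> f) \<phi>)" using Ex by blast
  also have "\<dots> = (\<exists>m. sat M ((e \<circ> f)(v:=m)) \<phi>)" by (simp only: eq)
  finally show ?case by (simp only: sat.simps(6))
qed (auto simp: evalt_rent comp_def)

lemma fv_renf: "inj f \<Longrightarrow> fv (renf f \<phi>) = f ` fv \<phi>"
  by (induction \<phi>) (auto simp: fvt_rent inj_eq)

lemma evalt_cong: "(\<forall>v\<in>fvt t. e v = e' v) \<Longrightarrow> evalt M e t = evalt M e' t"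
  by (induction t) (auto cong: map_cong)

lemma sat_cong: "(\<forall>v\<in>fv \<phi>. e v = e' v) \<Longrightarrow> sat M e \<phi> = sat M e' \<phi>"
proof (induction \<phi> arbitrary: e e')
  case (Eq s t) then show ?case using evalt_cong[of s e e' M] evalt_cong[of t e e' M] by auto
next
  case (Rl r ts e e')
  then have "\<forall>x\<in>set ts. \<forall>v\<in>fvt x. e v = e' v" by auto
  then have "\<forall>x\<in>set ts. evalt M e x = evalt M e' x" using evalt_cong by blast
  then have "map (evalt M e) ts = map (evalt M e') ts" by simp
  then show ?case by (simp only: sat.simps)
next
  case (Conj \<phi>1 \<phi>2 e e')
  have 1: "sat M e \<phi>1 = sat M e' \<phi>1" by (rule Conj.IH(1)) (use Conj.prems in auto)
  have 2: "sat M e \<phi>2 = sat M e' \<phi>2" by (rule Conj.IH(2)) (use Conj.prems in auto)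
  show ?case using 1 2 by simp
next
  case (Ex v \<phi>)
  have "\<And>m. sat M (e(v:=m)) \<phi> = sat M (e'(v:=m)) \<phi>"
    by (rule Ex.IH) (use Ex.prems in auto)
  then show ?case by simp
qed auto

primrec conjs :: "('f, 'r) fm list \<Rightarrow> ('f, 'r) fm" where
  "conjs [] = Neg FF"
| "conjs (\<psi> # \<psi>s) = Conj \<psi> (conjs \<psi>s)"

lemma sat_conjs: "sat M e (conjs \<psi>s) \<longleftrightarrow> (\<forall>\<psi>\<in>set \<psi>s. sat M e \<psi>)"
  by (induction \<psi>s) auto

lemma fv_conjs: "fv (conjs \<psi>s) = (\<Union>\<psi>\<in>set \<psi>s. fv \<psi>)"
  by (induction \<psi>s) auto

primrec exs :: "nat list \<Rightarrow> ('f, 'r) fm \<Rightarrow> ('f, 'r) fm" where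
  "exs [] \<psi> = \<psi>"
| "exs (v # vs) \<psi> = Ex v (exs vs \<psi>)"

lemma sat_exs: "sat M e (exs vs \<psi>) \<longleftrightarrow> (\<exists>e'. (\<forall>v. v \<notin> set vs \<longrightarrow> e' v = e v) \<and> sat M e' \<psi>)"
proof (induction vs arbitrary: e)
  case Nil
  then show ?case by (auto simp: fun_eq_iff) 
next
  case (Cons v vs)
  show ?case
  proof
    assume "sat M e (exs (v # vs) \<psi>)"
    then obtain m where "sat M (e(v:=m)) (exs vs \<psi>)" by auto
    then obtain e' where "\<forall>w. w \<notin> set vs \<longrightarrow> e' w = (e(v:=m)) w" "sat M e' \<psi>" using Cons by blast
    then show "\<exists>e'. (\<forall>w. w \<notin> set (v#vs) \<longrightarrow> e' w = e w) \<and> sat M e' \<psi>"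
      by (intro exI[of _ e']) auto
  next
    assume "\<exists>e'. (\<forall>w. w \<notin> set (v#vs) \<longrightarrow> e' w = e w) \<and> sat M e' \<psi>"
    then obtain e' where e': "\<forall>w. w \<notin> set (v#vs) \<longrightarrow> e' w = e w" "sat M e' \<psi>" by blast
    have "\<forall>w. w \<notin> set vs \<longrightarrow> e' w = (e(v:=e' v)) w" using e' by auto
    then have "sat M (e(v:=e' v)) (exs vs \<psi>)" using Cons e' by blast
    then show "sat M e (exs (v # vs) \<psi>)" by auto
  qed
qed

lemma fv_exs: "fv (exs vs \<psi>) = fv \<psi> - set vs"
  by (induction vs) auto

definition lit :: "bool \<Rightarrow> ('f, 'r) fm \<Rightarrow> ('f, 'r) fm" where
  "lit b \<psi> = (if b then \<psi> else Neg \<psi>)"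

lemma sat_lit: "sat M e (lit b \<psi>) \<longleftrightarrow> (sat M e \<psi> \<longleftrightarrow> b)"
  by (auto simp: lit_def)

lemma fv_lit: "fv (lit b \<psi>) = fv \<psi>"
  by (auto simp: lit_def)

primrec powlist :: "nat \<Rightarrow> nat set list" where
  "powlist 0 = [{}]"
| "powlist (Suc L) = powlist L @ map (insert L) (powlist L)"

lemma set_powlist: "set (powlist L) = Pow {..<L}"
proof (induction L)
  case (Suc L)
  have "Pow {..<Suc L} = Pow {..<L} \<union> insert L ` Pow {..<L}"
  proof
    show "Pow {..<Suc L} \<subseteq> Pow {..<L} \<union> insert L ` Pow {..<L}"
    proof
      fix X assume X: "X \<in> Pow {..<Suc L}"
      show "X \<in> Pow {..<L} \<union> insert L ` Pow {..<L}"
      proof (cases "L \<in> X")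
        case True
        then have "X = insert L (X - {L})" by auto
        moreover have "X - {L} \<in> Pow {..<L}" using X by auto
        ultimately show ?thesis by blast
      next
        case False then show ?thesis using X by (auto simp: less_Suc_eq)
      qed
    qed
  qed auto
  then show ?case using Suc by simp
qed simp

definition blk :: "(nat \<Rightarrow> 'm) \<Rightarrow> nat \<Rightarrow> nat \<Rightarrow> 'm list" where
  "blk e p len = map (\<lambda>v. e (p + v)) [0..<len]"

lemma length_blk[simp]: "length (blk e p len) = len"
  by (simp add: blk_def)

lemma blk_env_1: "length b = k \<Longrightarrow> blk (env (b @ c)) 0 k = b"
  by (auto simp: blk_def env_def nth_append intro: nth_equalityI)

lemma blk_env_2: "length b = k \<Longrightarrow> length c = n \<Longrightarrow> blk (env (b @ c)) k n = c"
  by (auto simp: blk_def env_def nth_append intro: nth_equalityI)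

lemma blk_cong: "(\<forall>v<len. e (p+v) = e' (p+v)) \<Longrightarrow> blk e p len = blk e' p len"
  by (auto simp: blk_def)


lemma topspace_cantor[simp]: "topspace cantor = UNIV"
  by (simp add: cantor_def PiE_UNIV_domain)

lemma openin_cantor_cyl:
  assumes "finite J" and dep: "\<And>q q'. (\<forall>i\<in>J. q i = q' i) \<Longrightarrow> P q \<Longrightarrow> P q'"
  shows "openin cantor {q. P q}"
proof (subst openin_subopen, intro ballI)
  fix q assume q: "q \<in> {q. P q}"
  define T where "T = PiE UNIV (\<lambda>i. if i \<in> J then {q i} else (UNIV::bool set))"
  have "openin cantor T"
    unfolding cantor_def T_def
  proof (subst openin_PiE_gen, rule disjI2, rule conjI)
    show "finite {i \<in> UNIV. (if i \<in> J then {q i} else UNIV) \<noteq> topspace (discrete_topology (UNIV::bool set))}"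
      by (rule finite_subset[OF _ assms(1)]) auto
    show "\<forall>i\<in>UNIV. openin (discrete_topology UNIV) (if i \<in> J then {q i} else UNIV)"
      by simp
  qed
  moreover have "q \<in> T" by (auto simp: T_def PiE_UNIV_domain)
  moreover have "T \<subseteq> {q. P q}"
  proof
    fix q' assume "q' \<in> T"
    then have "\<forall>i\<in>J. q' i \<in> {q i}" by (auto simp: T_def PiE_UNIV_domain Pi_iff split: if_splits)
    then have "\<forall>i\<in>J. q i = q' i" by auto
    then show "q' \<in> {q. P q}" using dep q by blast
  qed
  ultimately show "\<exists>T. openin cantor T \<and> q \<in> T \<and> T \<subseteq> {q. P q}" by blast
qed

lemma closedin_cantor_cyl:
  assumes "finite J" and dep: "\<And>q q'. (\<forall>i\<in>J. q i = q' i) \<Longrightarrow> P q \<Longrightarrow> P q'"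
  shows "closedin cantor {q. P q}"
proof -
  have "openin cantor {q. \<not> P q}"
  proof (rule openin_cantor_cyl[OF assms(1)])
    fix q q' assume agree: "\<forall>i\<in>J. q i = q' i" and nP: "\<not> P q"
    show "\<not> P q'"
    proof
      assume "P q'"
      moreover have "\<forall>i\<in>J. q' i = q i" using agree by simp
      ultimately have "P q" using dep by blast
      then show False using nP by simp
    qed
  qed
  moreover have "topspace cantor - {q. P q} = {q. \<not> P q}" by auto
  ultimately show ?thesis by (simp add: closedin_def)
qed

lemma compact_cantor: "compact_space cantor"
  unfolding cantor_def
  by (rule compact_space_product_topology[THEN iffD2], rule disjI2) (simp add: compact_space_discrete_topology)

lemma cm_cantor: "completely_metrizable_space cantor"
  unfolding cantor_def
proof (rule completely_metrizable_space_product_topology[THEN iffD2], rule disjI2, rule conjI)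
  show "countable {i \<in> (UNIV::nat set). \<not> (\<exists>a. topspace (discrete_topology (UNIV::bool set)) \<subseteq> {a})}"
    by (rule countable_subset[OF _ countableI_type]) (rule subset_UNIV)
  show "\<forall>i\<in>(UNIV::nat set). completely_metrizable_space (discrete_topology (UNIV::bool set))"
    using completely_metrizable_space_discrete_topology by blast
qed

definition cyl :: "nat \<Rightarrow> bool list \<Rightarrow> (nat \<Rightarrow> bool) set" where
  "cyl N bs = {q. \<forall>i<N. q i = bs ! i}"

definition cylB :: "(nat \<Rightarrow> bool) set set" where
  "cylB = range (\<lambda>p. cyl (fst p) (snd p))"

lemma countable_cylB: "countable cylB"
  unfolding cylB_def by (rule countable_image) (rule countableI_type)

lemma cyl_open: "openin cantor (cyl N bs)"
proof -
  have "openin cantor {q. \<forall>i<N. q i = bs ! i}"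
  proof (rule openin_cantor_cyl[where J="{..<N}"])
    show "finite {..<N}" by simp
    fix q q' :: "nat \<Rightarrow> bool"
    assume a1: "\<forall>i\<in>{..<N}. q i = q' i" and a2: "\<forall>i<N. q i = bs ! i"
    show "\<forall>i<N. q' i = bs ! i"
    proof (intro allI impI)
      fix i assume "i < N"
      then have "q i = q' i" "q i = bs ! i" using a1 a2 by auto
      then show "q' i = bs ! i" by simp
    qed
  qed
  then show ?thesis by (simp only: cyl_def)
qed

lemma cylB_open: "V \<in> cylB \<Longrightarrow> openin cantor V"
  unfolding cylB_def using cyl_open by (auto elim!: rangeE)

lemma cylB_mem: "cyl N bs \<in> cylB"
proof -
  have "cyl N bs = (\<lambda>p. cyl (fst p) (snd p)) (N, bs)" by simp
  also have "\<dots> \<in> cylB" unfolding cylB_def by (rule rangeI)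
  finally show ?thesis .
qed

lemma cylB_base:
  assumes U: "openin cantor U" and x: "x \<in> U"
  shows "\<exists>V\<in>cylB. x \<in> V \<and> V \<subseteq> U"
proof -
  have U': "openin (product_topology (\<lambda>_. discrete_topology (UNIV::bool set)) (UNIV::nat set)) U"
    using U by (simp only: cantor_def)
  obtain Uf where Uf0: "finite {i \<in> UNIV. Uf i \<noteq> topspace (discrete_topology (UNIV::bool set))}"
       "x \<in> PiE UNIV Uf" "PiE UNIV Uf \<subseteq> U"
    using openin_product_topology_alt[THEN iffD1, OF U', rule_format, OF x] by blast
  have Uf1: "finite {i. Uf i \<noteq> (UNIV::bool set)}"
    using Uf0(1) by (simp only: topspace_discrete_topology UNIV_I simp_thms)
  obtain N where N: "{i. Uf i \<noteq> UNIV} \<subseteq> {..<N}"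
    using finite_nat_bounded[OF Uf1] by blast
  define V where "V = cyl N (map x [0..<N])"
  have "V \<in> cylB" unfolding V_def by (rule cylB_mem)
  moreover have "x \<in> V" by (simp add: V_def cyl_def)
  moreover have VP: "V \<subseteq> PiE UNIV Uf"
  proof
    fix q assume q: "q \<in> V"
    have "q i \<in> Uf i" for i
    proof (cases "i < N")
      case True
      then have "q i = x i" using q by (simp add: V_def cyl_def)
      moreover have "x i \<in> Uf i" using Uf0(2) unfolding PiE_UNIV_domain Pi_iff by blast
      ultimately show ?thesis by simp
    next
      case False
      then have "Uf i = UNIV" using N by blast
      then show ?thesis by (simp only: UNIV_I)
    qed
    then show "q \<in> PiE UNIV Uf" unfolding PiE_UNIV_domain Pi_iff by blast
  qed
  ultimately have "V \<in> cylB" "x \<in> V" "V \<subseteq> U" using subset_trans[OF VP Uf0(3)] by simp_all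
  then show ?thesis by (intro bexI[of _ V] conjI)
qed

lemma sc_cantor: "second_countable cantor"
  unfolding second_countable_def
  using countable_cylB cylB_open cylB_base by blast

lemma compact_Polish_cantor_closed:
  assumes Q: "closedin cantor Q"
  shows "compact_Polish (subtopology cantor Q)"
proof -
  have c: "compactin cantor Q" by (rule closedin_compact_space[OF compact_cantor Q])
  have 1: "compact_space (subtopology cantor Q)" by (rule compact_space_subtopology[OF c])
  have 2: "completely_metrizable_space (subtopology cantor Q)"
    by (rule completely_metrizable_space_closedin[OF cm_cantor Q])
  have 3: "separable_space (subtopology cantor Q)"
    by (rule second_countable_imp_separable_space, rule second_countable_subtopology, rule sc_cantor)
  show ?thesis unfolding compact_Polish_def using 1 2 3 by blast
qed


definition altq :: "(nat \<Rightarrow> bool) \<Rightarrow> nat set \<Rightarrow> bool" where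
  "altq q X \<longleftrightarrow> (\<forall>j\<in>X. q j \<longleftrightarrow> even (card {i\<in>X. i < j}))"

lemma altq_open: "finite X \<Longrightarrow> openin cantor {q. altq q X}"
  by (rule openin_cantor_cyl[of X]) (auto simp: altq_def)

lemma lsc_of_count:
  fixes F :: "(nat \<Rightarrow> bool) \<Rightarrow> real" and h :: "(nat \<Rightarrow> bool) \<Rightarrow> nat" and r :: "nat \<Rightarrow> nat"
  assumes mono_r: "mono r"
    and hP: "\<And>q. finite (Xh q) \<and> card (Xh q) = h q \<and> altq q (Xh q)"
    and hle: "\<And>q X. finite X \<Longrightarrow> card X < L \<Longrightarrow> altq q X \<Longrightarrow> card X \<le> h q"
    and hL: "\<And>q. h q < L"
    and F: "\<And>q. F q = real (r (h q))"
  shows "lower_semicont (subtopology cantor Q) F"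
  unfolding lower_semicont_def
proof
  fix t
  define U where "U = \<Union> ((\<lambda>X. {q. altq q X}) ` {X. finite X \<and> card X < L \<and> t < real (r (card X))})"
  have "openin cantor U" unfolding U_def by (auto intro!: altq_open)
  moreover have "{x \<in> topspace (subtopology cantor Q). t < F x} = U \<inter> Q"
  proof (rule set_eqI)
    fix q
    have "t < F q \<longleftrightarrow> q \<in> U"
    proof
      assume "t < F q"
      then show "q \<in> U" unfolding U_def using hP[of q] hL[of q] F[of q] by auto
    next
      assume "q \<in> U"
      then obtain X where X: "finite X" "card X < L" "t < real (r (card X))" "altq q X"
        unfolding U_def by auto
      then have "r (card X) \<le> r (h q)" using hle mono_r by (simp add: monoD)
      then show "t < F q" using X F[of q] by linarith
    qed
    then show "q \<in> {x \<in> topspace (subtopology cantor Q). t < F x} \<longleftrightarrow> q \<in> U \<inter> Q" by auto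
  qed
  ultimately show "openin (subtopology cantor Q) {x \<in> topspace (subtopology cantor Q). t < F x}"
    by (auto simp: openin_subtopology)
qed

lemma topo:
  assumes L0: "0 < L" and noalt: "\<And>q X. q \<in> Q \<Longrightarrow> finite X \<Longrightarrow> card X = L \<Longrightarrow> \<not> altq q X"
  shows "\<exists>g. (\<forall>q\<in>Q. (\<lambda>i. if q i then 1 else 0) \<longlonglongrightarrow> g q) \<and> DBSC (subtopology cantor Q) g"
proof -
  define P where "P q c \<longleftrightarrow> c < L \<and> (\<exists>X. finite X \<and> card X = c \<and> altq q X)" for q c
  define h where "h q = (GREATEST c. P q c)" for q
  have P0: "P q 0" for q using L0 by (auto simp: P_def altq_def intro!: exI[of _ "{}"])
  have Pb: "\<And>y. P q y \<Longrightarrow> y \<le> L" for q by (auto simp: P_def)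
  have Ph: "P q (h q)" for q unfolding h_def by (rule GreatestI_nat[of "P q", OF P0 Pb])
  have hge: "P q c \<Longrightarrow> c \<le> h q" for q c unfolding h_def by (rule Greatest_le_nat[of "P q", OF _ Pb])
  define Xh where "Xh q = (SOME X. finite X \<and> card X = h q \<and> altq q X)" for q
  have hX: "finite (Xh q) \<and> card (Xh q) = h q \<and> altq q (Xh q)" for q
    unfolding Xh_def by (rule someI_ex) (use Ph[of q] in \<open>auto simp: P_def\<close>)
  have hL: "h q < L" for q using Ph[of q] by (auto simp: P_def)
  have hle: "finite X \<Longrightarrow> card X < L \<Longrightarrow> altq q X \<Longrightarrow> card X \<le> h q" for q X
    by (rule hge) (auto simp: P_def)
  define g where "g q = (if odd (h q) then 1 else (0::real))" for q
  define F1 where "F1 q = real ((h q + 1) div 2)" for q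
  define F2 where "F2 q = real (h q div 2)" for q
  have conv: "(\<lambda>i. if q i then 1 else 0) \<longlonglongrightarrow> g q" if q: "q \<in> Q" for q
  proof -
    obtain X where X: "finite X" "card X = h q" "altq q X" using hX by blast
    define N0 where "N0 = (if X = {} then 0 else Suc (Max X))"
    have ev: "q i \<longleftrightarrow> odd (h q)" if i: "i \<ge> N0" for i
    proof (rule ccontr)
      assume bad: "\<not> (q i \<longleftrightarrow> odd (h q))"
      have ilt: "\<forall>x\<in>X. x < i" using i X(1) by (auto simp: N0_def split: if_splits) (meson Max_ge le_imp_less_Suc order_less_le_trans)
      then have iX: "i \<notin> X" by auto
      define X' where "X' = insert i X"
      have fX': "finite X'" using X by (simp add: X'_def)
      have cX': "card X' = h q + 1" using X iX by (simp add: X'_def)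
      have "altq q X'"
        unfolding altq_def
      proof
        fix j assume j: "j \<in> X'"
        show "q j \<longleftrightarrow> even (card {i' \<in> X'. i' < j})"
        proof (cases "j = i")
          case True
          have "{i' \<in> X'. i' < j} = X" using ilt True iX by (auto simp: X'_def)
          then show ?thesis using True bad X(2) by auto
        next
          case False
          then have "j \<in> X" using j by (simp add: X'_def)
          then have "{i' \<in> X'. i' < j} = {i' \<in> X. i' < j}" using ilt by (auto simp: X'_def)
          then show ?thesis using X(3) \<open>j \<in> X\<close> by (simp add: altq_def)
        qed
      qed
      show False
      proof (cases "h q + 1 < L")
        case True
        then have "h q + 1 \<le> h q" using hle[of X' q] fX' cX' \<open>altq q X'\<close> by simp
        then show False by simp
      next
        case False
        then have "card X' = L" using cX' hL[of q] by simp
        then show False using noalt[OF q fX'] \<open>altq q X'\<close> by simp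
      qed
    qed
    have "eventually (\<lambda>i. (if q i then 1 else 0) = g q) sequentially"
      unfolding eventually_sequentially using ev by (auto simp: g_def)
    then show ?thesis by (rule tendsto_eventually)
  qed
  have mono1: "mono (\<lambda>c::nat. (c + 1) div 2)" by (auto intro!: monoI div_le_mono)
  have mono2: "mono (\<lambda>c::nat. c div 2)" by (auto intro!: monoI div_le_mono)
  have lsc1: "lower_semicont (subtopology cantor Q) F1"
    by (rule lsc_of_count[where h=h and Xh=Xh and L=L, OF mono1]) (use hX hle hL in \<open>auto simp: F1_def\<close>)
  have lsc2: "lower_semicont (subtopology cantor Q) F2"
    by (rule lsc_of_count[where h=h and Xh=Xh and L=L, OF mono2]) (use hX hle hL in \<open>auto simp: F2_def\<close>)
  have b1: "\<bar>F1 q\<bar> \<le> real L" for q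
  proof -
    have "(h q + 1) div 2 \<le> h q + 1" by (rule div_le_dividend)
    then have "(h q + 1) div 2 \<le> L" using hL[of q] by linarith
    then show ?thesis by (simp add: F1_def)
  qed
  have b2: "\<bar>F2 q\<bar> \<le> real L" for q
  proof -
    have "h q div 2 \<le> h q" by (rule div_le_dividend)
    then have "h q div 2 \<le> L" using hL[of q] by linarith
    then show ?thesis by (simp add: F2_def)
  qed
  have diff: "g q = F1 q - F2 q" for q
  proof (cases "odd (h q)")
    case True
    then obtain r where "h q = 2 * r + 1" by (metis oddE)
    then show ?thesis using True by (simp add: g_def F1_def F2_def)
  next
    case False
    then obtain r where "h q = 2 * r" by (metis evenE)
    then show ?thesis using False by (simp add: g_def F1_def F2_def)
  qed
  have "DBSC (subtopology cantor Q) g"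
    unfolding DBSC_def bounded_semicont_def
    using lsc1 lsc2 b1 b2 diff by blast
  then show ?thesis using conv by blast
qed


locale ctx =
  fixes M :: "('m, 'f, 'r) struc" and \<phi> :: "('f, 'r) fm" and n k :: nat
  assumes pf: "pformula \<phi> n k"
begin

definition fmap :: "nat \<Rightarrow> nat \<Rightarrow> nat \<Rightarrow> nat" where
  "fmap bx by v = (if v < n then bx + v else if v < n + k then by + (v - n) else v + bx + by + n + k)"

definition phiAt :: "nat \<Rightarrow> nat \<Rightarrow> ('f, 'r) fm" where
  "phiAt bx by = renf (fmap bx by) \<phi>"

lemma inj_fmap: assumes "bx + n \<le> by \<or> by + k \<le> bx" shows "inj (fmap bx by)"
  unfolding inj_def fmap_def using assms by (auto split: if_splits)

lemma sat_phiAt: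
  assumes "bx + n \<le> by \<or> by + k \<le> bx"
  shows "sat M e (phiAt bx by) \<longleftrightarrow> holds M \<phi> (blk e bx n) (blk e by k)"
proof -
  have "sat M e (phiAt bx by) = sat M (e \<circ> fmap bx by) \<phi>"
    unfolding phiAt_def by (rule sat_renf[OF inj_fmap[OF assms]])
  also have "\<dots> = sat M (env (blk e bx n @ blk e by k)) \<phi>"
  proof (rule sat_cong, intro ballI)
    fix v assume "v \<in> fv \<phi>"
    then have v: "v < n + k" using pf by (auto simp: pformula_def)
    show "(e \<circ> fmap bx by) v = env (blk e bx n @ blk e by k) v"
      using v by (auto simp: env_def fmap_def nth_append blk_def)
  qed
  finally show ?thesis by (simp add: holds_def)
qed

lemma fv_phiAt:
  assumes "bx + n \<le> by \<or> by + k \<le> bx"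
  shows "fv (phiAt bx by) \<subseteq> {bx..<bx+n} \<union> {by..<by+k}"
proof -
  have "fv (phiAt bx by) = fmap bx by ` fv \<phi>"
    unfolding phiAt_def by (rule fv_renf[OF inj_fmap[OF assms]])
  also have "\<dots> \<subseteq> fmap bx by ` {..<n+k}" using pf by (auto simp: pformula_def)
  also have "\<dots> \<subseteq> {bx..<bx+n} \<union> {by..<by+k}" by (auto simp: fmap_def)
  finally show ?thesis .
qed

lemma holds_phiAt_swap:
  assumes "length b = k" "length c = n"
  shows "holds M (phiAt k 0) b c \<longleftrightarrow> holds M \<phi> c b"
  unfolding holds_def[of M "phiAt k 0"] using assms
  by (subst sat_phiAt) (auto simp: blk_env_1 blk_env_2)

definition altR :: "(nat \<Rightarrow> 'm list) \<Rightarrow> nat set \<Rightarrow> bool" where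
  "altR a X \<longleftrightarrow> (\<exists>b. length b = k \<and> (\<forall>j\<in>X. holds M \<phi> (a j) b \<longleftrightarrow> even (card {i\<in>X. i < j})))"

definition AFf :: "(nat \<Rightarrow> 'm list) \<Rightarrow> nat \<Rightarrow> bool" where
  "AFf a L \<longleftrightarrow> (\<forall>X \<subseteq> {..<L}. altR a X)"

lemma altR_cong: "(\<forall>i\<in>X. a i = a' i) \<Longrightarrow> altR a X = altR a' X"
  unfolding altR_def by auto

lemma AFf_cong: "(\<forall>i<L. a i = a' i) \<Longrightarrow> AFf a L = AFf a' L"
  unfolding AFf_def using altR_cong by (metis lessThan_iff subsetD)

lemma AFf_mono: "AFf a L \<Longrightarrow> L' \<le> L \<Longrightarrow> AFf a L'"
  unfolding AFf_def by (meson lessThan_subset_iff order_trans)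

lemma altR_ext: "altR a (X \<union> Z) \<Longrightarrow> (\<forall>z\<in>Z. \<forall>x\<in>X. x < z) \<Longrightarrow> altR a X"
proof -
  assume A: "altR a (X \<union> Z)" and B: "\<forall>z\<in>Z. \<forall>x\<in>X. x < z"
  then obtain b where b: "length b = k" "\<forall>j\<in>X \<union> Z. holds M \<phi> (a j) b \<longleftrightarrow> even (card {i\<in>X \<union> Z. i < j})"
    unfolding altR_def by blast
  have "\<forall>j\<in>X. holds M \<phi> (a j) b \<longleftrightarrow> even (card {i\<in>X. i < j})"
  proof
    fix j assume j: "j \<in> X"
    have "{i\<in>X \<union> Z. i < j} = {i\<in>X. i < j}" using B j by force
    then show "holds M \<phi> (a j) b \<longleftrightarrow> even (card {i\<in>X. i < j})" using b j by auto
  qed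
  then show "altR a X" using b unfolding altR_def by blast
qed

lemma altR_mono:
  assumes e: "strict_mono e"
  shows "altR (a \<circ> e) X = altR a (e ` X)"
proof -
  have c: "card {i\<in>e ` X. i < e j} = card {i\<in>X. i < j}" if "j \<in> X" for j
  proof -
    have "{i\<in>e ` X. i < e j} = e ` {i\<in>X. i < j}" using e by (auto simp: strict_mono_less)
    moreover have "inj_on e {i\<in>X. i < j}" using e strict_mono_imp_inj_on by (metis inj_on_subset top_greatest)
    ultimately show ?thesis by (simp add: card_image)
  qed
  show ?thesis unfolding altR_def using c by auto
qed

end


context ctx begin

definition beta :: "nat \<Rightarrow> nat \<Rightarrow> nat" where
  "beta l t = (if t < l then t + 1 else if t = l then 0 else t) * n"

definition inner :: "nat \<Rightarrow> nat \<Rightarrow> nat set \<Rightarrow> ('f, 'r) fm" where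
  "inner l L X = exs [L*n..<L*n+k]
     (conjs (map (\<lambda>j. lit (even (card {i\<in>X. i < j})) (phiAt (beta l j) (L*n))) (sorted_list_of_set X)))"

definition Theta :: "nat \<Rightarrow> nat \<Rightarrow> ('f, 'r) fm" where
  "Theta l m = exs [(l+1)*n..<(l+1+m)*n] (conjs (map (inner l (l+1+m)) (powlist (l+1+m))))"

definition prm :: "(nat \<Rightarrow> 'm list) \<Rightarrow> nat \<Rightarrow> 'm list" where
  "prm a l = map (\<lambda>p. a (p div n) ! (p mod n)) [0..<l*n]"

lemma length_prm[simp]: "length (prm a l) = l * n"
  by (simp add: prm_def)

lemma beta_bound: assumes "l < L" "j < L" shows "beta l j + n \<le> L * n"
proof -
  consider "j < l" | "j = l" | "l < j" by linarith
  then show ?thesis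
  proof cases
    case 1
    have "beta l j + n = (j + 2) * n" using 1 by (simp add: beta_def algebra_simps)
    also have "\<dots> \<le> L * n" by (rule mult_le_mono1) (use 1 assms in auto)
    finally show ?thesis .
  next
    case 2
    have "beta l j + n = 1 * n" using 2 by (simp add: beta_def)
    also have "\<dots> \<le> L * n" by (rule mult_le_mono1) (use 2 assms in auto)
    finally show ?thesis .
  next
    case 3
    have "beta l j + n = (j + 1) * n" using 3 by (simp add: beta_def algebra_simps)
    also have "\<dots> \<le> L * n" by (rule mult_le_mono1) (use 3 assms in auto)
    finally show ?thesis .
  qed
qed

lemma sat_inner:
  assumes X: "X \<subseteq> {..<L}" and lL: "l < L"
  shows "sat M e' (inner l L X) \<longleftrightarrow> altR (\<lambda>t. blk e' (beta l t) n) X"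
proof -
  have fin: "finite X" using X finite_subset by blast
  have disj: "beta l j + n \<le> L * n" if "j \<in> X" for j using beta_bound[OF lL] X that by auto
  have blk_eq: "blk e'' (beta l j) n = blk e' (beta l j) n"
    if "j \<in> X" "\<forall>v. v \<notin> set [L*n..<L*n+k] \<longrightarrow> e'' v = e' v" for j e''
    by (rule blk_cong) (use disj[OF that(1)] that(2) in auto)
  have pw: "sat M e'' (phiAt (beta l j) (L*n)) \<longleftrightarrow> holds M \<phi> (blk e' (beta l j) n) (blk e'' (L*n) k)"
    if "j \<in> X" "\<forall>v. v \<notin> set [L*n..<L*n+k] \<longrightarrow> e'' v = e' v" for j e''
  proof -
    have "sat M e'' (phiAt (beta l j) (L*n)) \<longleftrightarrow> holds M \<phi> (blk e'' (beta l j) n) (blk e'' (L*n) k)"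
      by (rule sat_phiAt) (use disj[OF that(1)] in simp)
    then show ?thesis using blk_eq[OF that] by simp
  qed
  have S: "sat M e' (inner l L X) \<longleftrightarrow> (\<exists>e''. (\<forall>v. v \<notin> set [L*n..<L*n+k] \<longrightarrow> e'' v = e' v) \<and>
          (\<forall>j\<in>X. sat M e'' (phiAt (beta l j) (L*n)) \<longleftrightarrow> even (card {i\<in>X. i < j})))"
    unfolding inner_def sat_exs sat_conjs using fin by (simp add: sat_lit)
  show ?thesis
  proof
    assume "sat M e' (inner l L X)"
    then obtain e'' where ag: "\<forall>v. v \<notin> set [L*n..<L*n+k] \<longrightarrow> e'' v = e' v"
      and ev: "\<forall>j\<in>X. sat M e'' (phiAt (beta l j) (L*n)) \<longleftrightarrow> even (card {i\<in>X. i < j})"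
      using S by blast
    have "\<forall>j\<in>X. holds M \<phi> (blk e' (beta l j) n) (blk e'' (L*n) k) \<longleftrightarrow> even (card {i\<in>X. i < j})"
    proof
      fix j assume j: "j \<in> X"
      show "holds M \<phi> (blk e' (beta l j) n) (blk e'' (L*n) k) \<longleftrightarrow> even (card {i\<in>X. i < j})"
        using pw[OF j ag] ev j by simp
    qed
    then show "altR (\<lambda>t. blk e' (beta l t) n) X" unfolding altR_def
      by (intro exI[of _ "blk e'' (L*n) k"]) simp
  next
    assume "altR (\<lambda>t. blk e' (beta l t) n) X"
    then obtain b where b: "length b = k" "\<forall>j\<in>X. holds M \<phi> (blk e' (beta l j) n) b \<longleftrightarrow> even (card {i\<in>X. i < j})"
      unfolding altR_def by blast
    define e'' where "e'' v = (if L*n \<le> v \<and> v < L*n+k then b ! (v - L*n) else e' v)" for v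
    have be: "blk e'' (L*n) k = b" using b(1) by (auto simp: blk_def e''_def intro: nth_equalityI)
    have ag: "\<forall>v. v \<notin> set [L*n..<L*n+k] \<longrightarrow> e'' v = e' v" by (auto simp: e''_def)
    have "\<forall>j\<in>X. sat M e'' (phiAt (beta l j) (L*n)) \<longleftrightarrow> even (card {i\<in>X. i < j})"
    proof
      fix j assume j: "j \<in> X"
      show "sat M e'' (phiAt (beta l j) (L*n)) \<longleftrightarrow> even (card {i\<in>X. i < j})"
        using pw[OF j ag] b(2) j be by simp
    qed
    then show "sat M e' (inner l L X)" using S ag by blast
  qed
qed

lemma env_prm:
  assumes x: "length x = n" and a: "\<forall>i<l. length (a i) = n" and t: "t < l" and w: "w < n"
  shows "env (x @ prm a l) ((t+1)*n + w) = a t ! w"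
proof -
  have tl: "t * n + w < l * n"
  proof -
    have "t * n + w < (t + 1) * n" using w by simp
    also have "\<dots> \<le> l * n" by (rule mult_le_mono1) (use t in auto)
    finally show ?thesis .
  qed
  have "(t * n + w) div n = t" "(t * n + w) mod n = w" using w by auto
  then show ?thesis using x tl by (simp add: env_def nth_append prm_def algebra_simps)
qed

lemma blk_known:
  assumes x: "length x = n" and a: "\<forall>i<l. length (a i) = n" and t: "t \<le> l"
  shows "blk (env (x @ prm a l)) (beta l t) n = (if t < l then a t else x)"
proof (cases "t < l")
  case True
  have "blk (env (x @ prm a l)) (beta l t) n = map (\<lambda>w. a t ! w) [0..<n]"
    using env_prm[OF x a True] True by (simp add: blk_def beta_def)
  also have "\<dots> = a t" using a True by (auto intro: nth_equalityI)
  finally show ?thesis using True by simp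
next
  case False
  then have "t = l" using t by simp
  then show ?thesis using x by (auto simp: blk_def beta_def env_def nth_append intro: nth_equalityI)
qed

end


context ctx begin

lemma sat_Theta:
  assumes x: "length x = n" and a: "\<forall>i<l. length (a i) = n"
  shows "sat M (env (x @ prm a l)) (Theta l m) \<longleftrightarrow>
    (\<exists>a'. (\<forall>i<l. a' i = a i) \<and> a' l = x \<and> (\<forall>i<l+1+m. length (a' i) = n) \<and> AFf a' (l+1+m))"
proof -
  define L where "L = l + 1 + m"
  define e where "e = env (x @ prm a l)"
  have lL: "l < L" by (simp add: L_def)
  have low: "blk e' (beta l t) n = blk e (beta l t) n"
    if "t \<le> l" "\<forall>v. v \<notin> set [(l+1)*n..<L*n] \<longrightarrow> e' v = e v" for t e'
  proof (rule blk_cong, intro allI impI)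
    fix w assume "w < n"
    have "beta l t + n \<le> (l+1) * n" using beta_bound[of l "l+1" t] that(1) by simp
    then show "e' (beta l t + w) = e (beta l t + w)" using that(2) \<open>w < n\<close> by auto
  qed
  have "sat M e (Theta l m) \<longleftrightarrow> (\<exists>e'. (\<forall>v. v \<notin> set [(l+1)*n..<L*n] \<longrightarrow> e' v = e v) \<and>
          (\<forall>X\<in>Pow {..<L}. sat M e' (inner l L X)))"
    unfolding Theta_def L_def[symmetric] sat_exs sat_conjs set_map set_powlist by blast
  also have "\<dots> \<longleftrightarrow> (\<exists>e'. (\<forall>v. v \<notin> set [(l+1)*n..<L*n] \<longrightarrow> e' v = e v) \<and>
          AFf (\<lambda>t. blk e' (beta l t) n) L)"
    unfolding AFf_def using sat_inner[OF _ lL] by auto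
  also have "\<dots> \<longleftrightarrow> (\<exists>a'. (\<forall>i<l. a' i = a i) \<and> a' l = x \<and> (\<forall>i<L. length (a' i) = n) \<and> AFf a' L)"
  proof
    assume "\<exists>e'. (\<forall>v. v \<notin> set [(l+1)*n..<L*n] \<longrightarrow> e' v = e v) \<and> AFf (\<lambda>t. blk e' (beta l t) n) L"
    then obtain e' where e': "\<forall>v. v \<notin> set [(l+1)*n..<L*n] \<longrightarrow> e' v = e v" "AFf (\<lambda>t. blk e' (beta l t) n) L"
      by blast
    define a' where "a' t = blk e' (beta l t) n" for t
    have "\<forall>i<l. a' i = a i" using low[OF _ e'(1)] blk_known[OF x a] by (simp add: a'_def e_def)
    moreover have "a' l = x" using low[OF _ e'(1)] blk_known[OF x a] by (simp add: a'_def e_def)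
    moreover have "\<forall>i<L. length (a' i) = n" by (simp add: a'_def)
    moreover have "AFf a' L" using e'(2) by (simp add: a'_def[abs_def])
    ultimately show "\<exists>a'. (\<forall>i<l. a' i = a i) \<and> a' l = x \<and> (\<forall>i<L. length (a' i) = n) \<and> AFf a' L"
      by blast
  next
    assume "\<exists>a'. (\<forall>i<l. a' i = a i) \<and> a' l = x \<and> (\<forall>i<L. length (a' i) = n) \<and> AFf a' L"
    then obtain a' where a': "\<forall>i<l. a' i = a i" "a' l = x" "\<forall>i<L. length (a' i) = n" "AFf a' L"
      by blast
    define e' where "e' v = (if (l+1)*n \<le> v \<and> v < L*n then a' (v div n) ! (v mod n) else e v)" for v
    have agree: "\<forall>v. v \<notin> set [(l+1)*n..<L*n] \<longrightarrow> e' v = e v" by (auto simp: e'_def)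
    have same: "blk e' (beta l t) n = a' t" if t: "t < L" for t
    proof (cases "t \<le> l")
      case True
      then show ?thesis using low[OF True agree] blk_known[OF x a True] a'(1,2)
        by (auto simp: e_def)
    next
      case False
      then have bt: "beta l t = t * n" by (simp add: beta_def)
      have "blk e' (t * n) n = map (\<lambda>w. a' t ! w) [0..<n]"
        unfolding blk_def
      proof (rule map_cong[OF refl])
        fix w assume "w \<in> set [0..<n]"
        then have w: "w < n" by simp
        have "(l+1)*n \<le> t * n" by (rule mult_le_mono1) (use False in auto)
        moreover have "t * n + w < L * n"
        proof -
          have "t * n + w < (t+1) * n" using w by simp
          also have "\<dots> \<le> L * n" by (rule mult_le_mono1) (use t in auto)
          finally show ?thesis .
        qed
        moreover have "(t * n + w) div n = t" "(t * n + w) mod n = w" using w by auto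
        ultimately show "e' (t * n + w) = a' t ! w" by (simp add: e'_def)
      qed
      also have "\<dots> = a' t" using a'(3) t by (auto intro: nth_equalityI)
      finally show ?thesis using bt by simp
    qed
    have "AFf (\<lambda>t. blk e' (beta l t) n) L" using a'(4) AFf_cong[of L "\<lambda>t. blk e' (beta l t) n" a'] same by simp
    then show "\<exists>e'. (\<forall>v. v \<notin> set [(l+1)*n..<L*n] \<longrightarrow> e' v = e v) \<and> AFf (\<lambda>t. blk e' (beta l t) n) L"
      using agree by blast
  qed
  finally show ?thesis by (simp add: e_def L_def)
qed

lemma fv_inner: assumes X: "X \<subseteq> {..<L}"
  shows "fv (inner l L X) = (\<Union>j\<in>X. fv (phiAt (beta l j) (L*n))) - {L*n..<L*n+k}"
proof -
  have "finite X" using X finite_subset by blast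
  then show ?thesis by (simp add: inner_def fv_exs fv_conjs fv_lit)
qed

lemma fv_Theta: "fv (Theta l m) \<subseteq> {..<n + l*n}"
proof
  fix v assume v: "v \<in> fv (Theta l m)"
  define L where "L = l + 1 + m"
  have lL: "l < L" by (simp add: L_def)
  have "fv (Theta l m) = (\<Union>X\<in>Pow {..<L}. fv (inner l L X)) - {(l+1)*n..<L*n}"
    unfolding Theta_def L_def[symmetric] fv_exs fv_conjs set_map set_powlist by simp
  with v obtain X where X: "X \<subseteq> {..<L}" and vX: "v \<in> fv (inner l L X)"
    and vext: "v \<notin> {(l+1)*n..<L*n}" by auto
  from vX obtain j where j: "j \<in> X" and vin: "v \<in> fv (phiAt (beta l j) (L*n))"
    and vL: "v \<notin> {L*n..<L*n+k}" unfolding fv_inner[OF X] by auto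
  have jL: "j < L" using X j by auto
  have disj: "beta l j + n \<le> L * n" using beta_bound[OF lL jL] .
  then have "v \<in> {beta l j..<beta l j + n}" using vin vL fv_phiAt[of "beta l j" "L*n"] by auto
  then have v1: "beta l j \<le> v" "v < beta l j + n" by auto
  show "v \<in> {..<n + l*n}"
  proof (cases "j \<le> l")
    case True
    have "beta l j + n \<le> (l+1) * n" using beta_bound[of l "l+1" j] True by simp
    then show ?thesis using v1 by simp
  next
    case False
    then have "beta l j = j * n" by (simp add: beta_def)
    moreover have "(l+1)*n \<le> j * n" by (rule mult_le_mono1) (use False in auto)
    ultimately have "v \<in> {(l+1)*n..<L*n}" using v1 disj by auto
    then show ?thesis using vext by blast
  qed
qed

end


lemma sat_use:
  fixes M :: "('m, 'f, 'r) struc"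
  assumes mon: "aleph1_saturated M"
    and fvs: "\<And>i::nat. fv (\<Psi> i) \<subseteq> {..<kk + length (C i)}"
    and fin: "\<And>N. \<exists>b. length b = kk \<and> (\<forall>i<N. holds M (\<Psi> i) b (C i))"
  shows "\<exists>b. length b = kk \<and> (\<forall>i. holds M (\<Psi> i) b (C i))"
proof -
  define p where "p = (\<lambda>i. (\<Psi> i, C i)) ` (UNIV :: nat set)"
  have 1: "\<forall>(\<psi>, c)\<in>p. fv \<psi> \<subseteq> {..<kk + length c}" using fvs by (auto simp: p_def)
  have eq: "(\<Union>(\<psi>, c)\<in>p. set c) = (\<Union>i\<in>(UNIV::nat set). set (C i))" by (auto simp: p_def)
  have "countable (\<Union>i\<in>(UNIV::nat set). set (C i))"
    by (rule countable_UN[OF countableI_type]) (rule countable_finite, simp)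
  then have 2: "countable (\<Union>(\<psi>, c)\<in>p. set c)" by (simp only: eq)
  have 3: "\<exists>b. length b = kk \<and> (\<forall>(\<psi>, c)\<in>F. holds M \<psi> b c)" if F: "finite F" "F \<subseteq> p" for F
  proof -
    obtain G where G: "finite G" "F = (\<lambda>i. (\<Psi> i, C i)) ` G"
      using F unfolding p_def by (meson finite_subset_image)
    obtain N where N: "\<forall>i\<in>G. i < N" using G(1) finite_nat_bounded by (metis lessThan_iff subsetD)
    obtain b where b: "length b = kk" "\<forall>i<N. holds M (\<Psi> i) b (C i)" using fin by blast
    then show ?thesis using N G(2) by auto
  qed
  have 4: "\<forall>F. finite F \<longrightarrow> F \<subseteq> p \<longrightarrow> (\<exists>b. length b = kk \<and> (\<forall>(\<psi>, c)\<in>F. holds M \<psi> b c))"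
    using 3 by blast
  have "\<exists>b. length b = kk \<and> (\<forall>(\<psi>, c)\<in>p. holds M \<psi> b c)"
    using mon[unfolded aleph1_saturated_def, THEN spec[of _ kk], THEN spec[of _ p], THEN mp, OF 1, THEN mp, OF 2, THEN mp, OF 4] .
  then show ?thesis by (auto simp: p_def)
qed

lemma filler:
  fixes S :: "nat set"
  shows "\<exists>X. X \<subseteq> {..<2*N} \<and> (\<forall>i<N. 2*i+1 \<in> X \<and> (even (card {j\<in>X. j < 2*i+1}) \<longleftrightarrow> i \<in> S))"
proof (induction N)
  case 0
  then show ?case by auto
next
  case (Suc N)
  then obtain X where X: "X \<subseteq> {..<2*N}" "\<forall>i<N. 2*i+1 \<in> X \<and> (even (card {j\<in>X. j < 2*i+1}) \<longleftrightarrow> i \<in> S)"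
    by blast
  have finX: "finite X" using X(1) finite_subset by blast
  define X' where "X' = (if (even (card X) \<longleftrightarrow> N \<in> S) then insert (2*N+1) X else insert (2*N+1) (insert (2*N) X))"
  have sub: "X' \<subseteq> {..<2*Suc N}" using X(1) by (auto simp: X'_def)
  have old: "{j\<in>X'. j < 2*i+1} = {j\<in>X. j < 2*i+1}" if "i < N" for i
    using that by (auto simp: X'_def)
  have new: "{j\<in>X'. j < 2*N+1} = (if (even (card X) \<longleftrightarrow> N \<in> S) then X else insert (2*N) X)"
    using X(1) by (auto simp: X'_def)
  have nX: "2*N \<notin> X" using X(1) by auto
  have cnew: "even (card {j\<in>X'. j < 2*N+1}) \<longleftrightarrow> N \<in> S"
  proof (cases "even (card X) \<longleftrightarrow> N \<in> S")
    case True
    then show ?thesis using new by simp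
  next
    case False
    then have "{j\<in>X'. j < 2*N+1} = insert (2*N) X" using new by simp
    then have "card {j\<in>X'. j < 2*N+1} = Suc (card X)" using finX nX by simp
    then show ?thesis using False by simp
  qed
  have "\<forall>i<Suc N. 2*i+1 \<in> X' \<and> (even (card {j\<in>X'. j < 2*i+1}) \<longleftrightarrow> i \<in> S)"
  proof (intro allI impI)
    fix i assume "i < Suc N"
    then consider "i < N" | "i = N" by linarith
    then show "2*i+1 \<in> X' \<and> (even (card {j\<in>X'. j < 2*i+1}) \<longleftrightarrow> i \<in> S)"
    proof cases
      case 1 then show ?thesis using X(2) old[OF 1] by (auto simp: X'_def)
    next
      case 2 then show ?thesis using cnew by (auto simp: X'_def)
    qed
  qed
  then show ?case using sub by blast
qed

context ctx begin

definition Good :: "nat \<Rightarrow> (nat \<Rightarrow> 'm list) \<Rightarrow> bool" where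
  "Good l a \<longleftrightarrow> (\<forall>m. \<exists>a'. (\<forall>i<l. a' i = a i) \<and> (\<forall>i<l+m. length (a' i) = n) \<and> AFf a' (l+m))"

lemma holds_lit: "holds M (lit B \<psi>) b c \<longleftrightarrow> (holds M \<psi> b c \<longleftrightarrow> B)"
  by (simp add: holds_def sat_lit)

lemma step:
  assumes mon: "aleph1_saturated M" and G: "Good l a"
  shows "\<exists>x. length x = n \<and> Good (Suc l) (a(l := x))"
proof -
  have alen: "\<forall>i<l. length (a i) = n"
    using G[unfolded Good_def, rule_format, of 0] by auto
  have fvs: "fv (Theta l m) \<subseteq> {..<n + length (prm a l)}" for m
    using fv_Theta by simp
  have fin: "\<exists>x. length x = n \<and> (\<forall>m<N. holds M (Theta l m) x (prm a l))" for N
  proof -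
    obtain a' where a': "\<forall>i<l. a' i = a i" "\<forall>i<l+(N+1). length (a' i) = n" "AFf a' (l+(N+1))"
      using G unfolding Good_def by blast
    have xl: "length (a' l) = n" using a'(2) by simp
    have "holds M (Theta l m) (a' l) (prm a l)" if "m < N" for m
    proof -
      have "\<forall>i<l+1+m. length (a' i) = n" using a'(2) that by simp
      moreover have "AFf a' (l+1+m)" using a'(3) AFf_mono that by simp
      ultimately show ?thesis unfolding holds_def using sat_Theta[OF xl alen] a'(1) by blast
    qed
    then show ?thesis using xl by blast
  qed
  obtain x where x: "length x = n" "\<forall>m. holds M (Theta l m) x (prm a l)"
    using sat_use[OF mon fvs fin] by blast
  have "Good (Suc l) (a(l := x))"
    unfolding Good_def
  proof
    fix m
    obtain a' where a': "\<forall>i<l. a' i = a i" "a' l = x" "\<forall>i<l+1+m. length (a' i) = n" "AFf a' (l+1+m)"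
      using x(2)[rule_format, of m] sat_Theta[OF x(1) alen] unfolding holds_def by blast
    show "\<exists>a''. (\<forall>i<Suc l. a'' i = (a(l := x)) i) \<and> (\<forall>i<Suc l+m. length (a'' i) = n) \<and> AFf a'' (Suc l+m)"
      using a' by (intro exI[of _ a']) (auto simp: less_Suc_eq)
  qed
  then show ?thesis using x(1) by blast
qed

primrec pre :: "nat \<Rightarrow> nat \<Rightarrow> 'm list" where
  "pre 0 = (\<lambda>_. [])"
| "pre (Suc l) = (pre l)(l := (SOME x. length x = n \<and> Good (Suc l) ((pre l)(l := x))))"

lemma Good_pre:
  assumes mon: "aleph1_saturated M" and G0: "Good 0 (\<lambda>_. [])"
  shows "Good l (pre l)"
proof (induction l)
  case 0 then show ?case using G0 by simp
next
  case (Suc l)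
  have "\<exists>x. length x = n \<and> Good (Suc l) ((pre l)(l := x))" by (rule step[OF mon Suc])
  then have "Good (Suc l) ((pre l)(l := (SOME x. length x = n \<and> Good (Suc l) ((pre l)(l := x)))))"
    by (metis (mono_tags, lifting) someI_ex)
  then show ?case by (simp only: pre.simps)
qed

lemma pre_stable: "i < l \<Longrightarrow> pre l i = pre (Suc i) i"
proof (induction l)
  case 0 then show ?case by simp
next
  case (Suc l)
  show ?case
  proof (cases "i = l")
    case True then show ?thesis by simp
  next
    case False
    then have "i < l" using Suc.prems by simp
    then show ?thesis using Suc.IH False by simp
  qed
qed

lemma shatter:
  assumes mon: "aleph1_saturated M" and AF: "\<And>L. AFf s L" and len: "\<And>i. length (s i) = n"
  shows "\<exists>b. length b = k \<and> (\<forall>i. holds M \<phi> (s (2*i+1)) b \<longleftrightarrow> i \<in> S)"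
proof -
  have fvs: "fv (lit (i \<in> S) (phiAt k 0)) \<subseteq> {..<k + length (s (2*i+1))}" for i
    using fv_phiAt[of k 0] len by (auto simp: fv_lit)
  have fin: "\<exists>b. length b = k \<and> (\<forall>i<N. holds M (lit (i \<in> S) (phiAt k 0)) b (s (2*i+1)))" for N
  proof -
    obtain X where X: "X \<subseteq> {..<2*N}" "\<forall>i<N. 2*i+1 \<in> X \<and> (even (card {j\<in>X. j < 2*i+1}) \<longleftrightarrow> i \<in> S)"
      using filler by blast
    have "altR s X" using AF[of "2*N"] X(1) by (simp add: AFf_def)
    then obtain b where b: "length b = k" "\<forall>j\<in>X. holds M \<phi> (s j) b \<longleftrightarrow> even (card {i\<in>X. i < j})"
      unfolding altR_def by blast
    have "holds M (lit (i \<in> S) (phiAt k 0)) b (s (2*i+1))" if "i < N" for i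
      using X(2) b that holds_phiAt_swap[OF b(1) len] by (simp add: holds_lit)
    then show ?thesis using b(1) by blast
  qed
  obtain b where b: "length b = k" "\<forall>i. holds M (lit (i \<in> S) (phiAt k 0)) b (s (2*i+1))"
    using sat_use[OF mon fvs fin] by blast
  then show ?thesis using holds_phiAt_swap[OF b(1) len] by (auto simp: holds_lit)
qed

lemma dich:
  assumes mon: "aleph1_saturated M" and nip: "NIP M" and alen: "\<And>i. length (a i) = n"
  shows "\<exists>L I. infinite I \<and> (\<forall>X. X \<subseteq> I \<and> finite X \<and> card X = L \<longrightarrow> \<not> altR a X)"
proof (rule ccontr)
  assume H: "\<not> ?thesis"
  have H': "\<exists>X. X \<subseteq> I \<and> finite X \<and> card X = L \<and> altR a X" if I: "infinite I" for L I
  proof (rule ccontr)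
    assume "\<not> (\<exists>X. X \<subseteq> I \<and> finite X \<and> card X = L \<and> altR a X)"
    then have "\<forall>X. X \<subseteq> I \<and> finite X \<and> card X = L \<longrightarrow> \<not> altR a X" by blast
    then have "\<exists>L I. infinite I \<and> (\<forall>X. X \<subseteq> I \<and> finite X \<and> card X = L \<longrightarrow> \<not> altR a X)"
      using I by (intro exI[of _ L] exI[of _ I] conjI)
    then show False using H by (rule notE[rotated])
  qed
  have base: "\<exists>a'. (\<forall>i<L. length (a' i) = n) \<and> AFf a' L" for L
  proof -
    obtain Y and t :: nat where Y: "Y \<subseteq> UNIV" "infinite Y" "t < 2"
      "\<forall>X. X \<subseteq> Y \<and> finite X \<and> card X = L \<longrightarrow> (if altR a X then 1 else 0) = t"
    proof -
      have r: "\<forall>X. X \<subseteq> (UNIV::nat set) \<and> finite X \<and> card X = L \<longrightarrow> (if altR a X then (1::nat) else 0) < 2"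
        by simp
      from Ramsey[OF infinite_UNIV_nat r] obtain Y and t :: nat where
        "Y \<subseteq> UNIV" "infinite Y" "t < 2"
        "\<forall>X. X \<subseteq> Y \<and> finite X \<and> card X = L \<longrightarrow> (if altR a X then 1 else 0) = t"
        by (elim exE conjE)
      then show ?thesis by (rule that)
    qed
    obtain X0 where X0: "X0 \<subseteq> Y" "finite X0" "card X0 = L" "altR a X0" using H'[OF Y(2)] by blast
    have "(if altR a X0 then 1 else 0) = t" using Y(4) X0(1,2,3) by blast
    then have t1: "t = 1" using X0(4) by simp
    have allY: "altR a X" if "X \<subseteq> Y" "finite X" "card X = L" for X
    proof (rule ccontr)
      assume na: "\<not> altR a X"
      have "(if altR a X then 1 else 0) = t" using Y(4) that by blast
      then have "t = 0" using na by simp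
      then show False using t1 by simp
    qed
    define e where "e = enumerate Y"
    have sm: "strict_mono e" unfolding e_def using strict_mono_enumerate[OF Y(2)] .
    have rng: "range e \<subseteq> Y" unfolding e_def using range_enumerate[OF Y(2)] by simp
    have "AFf (a \<circ> e) L"
      unfolding AFf_def
    proof (intro allI impI)
      fix X assume X: "X \<subseteq> {..<L}"
      define Z where "Z = {L..<L + (L - card X)}"
      have finX: "finite X" using X finite_subset by blast
      have cX: "card X \<le> L" using card_mono[OF _ X] by simp
      have disj: "X \<inter> Z = {}" using X by (auto simp: Z_def)
      have cXZ: "card (X \<union> Z) = L" using card_Un_disjoint[OF finX _ disj] cX by (simp add: Z_def)
      have inj: "inj_on e (X \<union> Z)" by (rule strict_mono_imp_inj_on[OF sm])
      have s1: "e ` (X \<union> Z) \<subseteq> Y" using rng by blast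
      have s2: "finite (e ` (X \<union> Z))" using finX by (simp add: Z_def)
      have s3: "card (e ` (X \<union> Z)) = L" using card_image[OF inj] cXZ by simp
      have "altR a (e ` (X \<union> Z))" by (rule allY[OF s1 s2 s3])
      then have "altR (a \<circ> e) (X \<union> Z)" using altR_mono[OF sm] by simp
      moreover have "\<forall>z\<in>Z. \<forall>x\<in>X. x < z" using X by (auto simp: Z_def)
      ultimately show "altR (a \<circ> e) X" by (rule altR_ext)
    qed
    then show ?thesis using alen by (intro exI[of _ "a \<circ> e"]) auto
  qed
  have G0: "Good 0 (\<lambda>_. [])" unfolding Good_def
  proof
    fix m
    obtain a' where "\<forall>i<m. length (a' i) = n" "AFf a' m" using base by blast
    then show "\<exists>a'. (\<forall>i<0. a' i = []) \<and> (\<forall>i<0+m. length (a' i) = n) \<and> AFf a' (0+m)" by auto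
  qed
  define s where "s i = pre (Suc i) i" for i
  have AF: "AFf s L" for L
  proof -
    have "\<exists>a'. (\<forall>i<L. a' i = pre L i) \<and> (\<forall>i<L+0. length (a' i) = n) \<and> AFf a' (L+0)"
      using Good_pre[OF mon G0, of L] unfolding Good_def by blast
    then obtain a' where a': "\<forall>i<L. a' i = pre L i" "AFf a' L" by auto
    have "\<forall>i<L. a' i = s i" using a'(1) pre_stable by (simp add: s_def)
    then show ?thesis using a'(2) AFf_cong[of L a' s] by simp
  qed
  have len: "length (s i) = n" for i
  proof -
    obtain a' where a': "\<forall>j<Suc i. a' j = pre (Suc i) j" "\<forall>j<Suc i + 0. length (a' j) = n"
      using Good_pre[OF mon G0, of "Suc i"] unfolding Good_def by blast
    have 1: "a' i = pre (Suc i) i" using a'(1)[rule_format, of i] by (simp del: pre.simps)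
    have 2: "length (a' i) = n" using a'(2)[rule_format, of i] by simp
    show ?thesis unfolding s_def using 1 2 by (simp del: pre.simps)
  qed
  define a2 where "a2 i = s (2*i+1)" for i
  have len2: "\<forall>i. length (a2 i) = n" by (simp add: a2_def len)
  have sh2: "\<forall>S. \<exists>b. length b = k \<and> (\<forall>i. holds M \<phi> (a2 i) b \<longleftrightarrow> i \<in> S)"
  proof
    fix S
    show "\<exists>b. length b = k \<and> (\<forall>i. holds M \<phi> (a2 i) b \<longleftrightarrow> i \<in> S)"
      unfolding a2_def by (rule shatter[OF mon AF len])
  qed
  have ex: "\<exists>a :: nat \<Rightarrow> 'm list. (\<forall>i. length (a i) = n) \<and>
          (\<forall>S :: nat set. \<exists>b. length b = k \<and> (\<forall>i. holds M \<phi> (a i) b \<longleftrightarrow> i \<in> S))"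
    by (rule exI[of _ a2], rule conjI[OF len2 sh2])
  have nip': "\<forall>\<phi> n k. pformula \<phi> n k \<longrightarrow>
     \<not> (\<exists>a :: nat \<Rightarrow> 'm list. (\<forall>i. length (a i) = n) \<and>
          (\<forall>S :: nat set. \<exists>b. length b = k \<and> (\<forall>i. holds M \<phi> (a i) b \<longleftrightarrow> i \<in> S)))"
    using nip unfolding NIP_def .
  show False using nip'[THEN spec[of _ \<phi>], THEN spec[of _ n], THEN spec[of _ k], THEN mp, OF pf] ex by contradiction
qed

end


lemma type_space_closed: "closedin cantor (type_space M \<phi> k a)"
proof -
  define R where "R N q \<longleftrightarrow> (\<exists>b. length b = k \<and> (\<forall>i<N. holds M \<phi> (a i) b \<longleftrightarrow> q i))" for N q
  have eq: "type_space M \<phi> k a = (\<Inter>N\<in>(UNIV::nat set). {q. R N q})"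
    by (auto simp: type_space_def R_def)
  have "closedin cantor {q. R N q}" for N
  proof (rule closedin_cantor_cyl[where J="{..<N}"])
    show "finite {..<N}" by simp
    fix q q' :: "nat \<Rightarrow> bool" assume ag: "\<forall>i\<in>{..<N}. q i = q' i" and R: "R N q"
    then obtain b where b: "length b = k" "\<forall>i<N. holds M \<phi> (a i) b \<longleftrightarrow> q i" by (auto simp: R_def)
    have "\<forall>i<N. holds M \<phi> (a i) b \<longleftrightarrow> q' i" using b(2) ag by auto
    then show "R N q'" using b(1) by (auto simp: R_def)
  qed
  then have "closedin cantor (\<Inter>N\<in>(UNIV::nat set). {q. R N q})"
    by (intro closedin_INT) auto
  then show ?thesis by (simp only: eq)
qed

theorem proposition3p6:
  fixes M :: "('m, 'f, 'r) struc"
    and \<C> :: "(nat \<Rightarrow> bool) topology \<Rightarrow> ((nat \<Rightarrow> bool) \<Rightarrow> real) \<Rightarrow> bool"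
  assumes monster: "aleph1_saturated M"
    and C_Baire1: "\<And>X f. \<C> X f \<Longrightarrow> compact_Polish X \<and> Baire1 X f"
    and C_DBSC: "\<And>X f. compact_Polish X \<Longrightarrow> DBSC X f \<Longrightarrow> \<C> X f"
  shows "stable M \<longleftrightarrow> NIP M \<and> is_class \<C> M"
proof
  assume st: "stable M"
  show "NIP M \<and> is_class \<C> M"
  proof
    show "NIP M" unfolding NIP_def
    proof (intro allI impI notI)
      fix \<phi> :: "('f, 'r) fm" and n k :: nat assume pf: "pformula \<phi> n k"
        and ex: "\<exists>a :: nat \<Rightarrow> 'm list. (\<forall>i. length (a i) = n) \<and>
          (\<forall>S :: nat set. \<exists>b. length b = k \<and> (\<forall>i. holds M \<phi> (a i) b \<longleftrightarrow> i \<in> S))"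
      then obtain a :: "nat \<Rightarrow> 'm list" where a: "\<forall>i. length (a i) = n"
        and sh: "\<forall>S :: nat set. \<exists>b. length b = k \<and> (\<forall>i. holds M \<phi> (a i) b \<longleftrightarrow> i \<in> S)" by blast
      have "\<forall>j. \<exists>b. length b = k \<and> (\<forall>i. holds M \<phi> (a i) b \<longleftrightarrow> i < j)"
      proof
        fix j :: nat
        show "\<exists>b. length b = k \<and> (\<forall>i. holds M \<phi> (a i) b \<longleftrightarrow> i < j)"
          using sh[rule_format, of "{..<j}"] by simp
      qed
      then obtain b where b: "\<forall>j. length (b j) = k \<and> (\<forall>i. holds M \<phi> (a i) (b j) \<longleftrightarrow> i < j)"
        by metis
      have "order_property M \<phi> n k" unfolding order_property_def
        using a b by blast
      then show False using st pf unfolding stable_def by blast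
    qed
    show "is_class \<C> M" unfolding is_class_def
    proof (intro allI impI notI)
      fix \<phi> :: "('f, 'r) fm" and n k :: nat and a :: "nat \<Rightarrow> 'm list"
      assume pf: "pformula \<phi> n k" and a: "\<forall>i. length (a i) = n"
        and op: "\<exists>b :: nat \<Rightarrow> 'm list. (\<forall>j. length (b j) = k) \<and> (\<forall>i j. holds M \<phi> (a i) (b j) \<longleftrightarrow> i < j)"
      have "order_property M \<phi> n k" unfolding order_property_def using a op by blast
      then show False using st pf unfolding stable_def by blast
    qed
  qed
next
  assume H: "NIP M \<and> is_class \<C> M"
  show "stable M" unfolding stable_def
  proof (intro allI impI notI)
    fix \<phi> :: "('f, 'r) fm" and n k :: nat assume pf: "pformula \<phi> n k" and op: "order_property M \<phi> n k"
    obtain a b :: "nat \<Rightarrow> 'm list" where a: "\<forall>i. length (a i) = n" and b: "\<forall>j. length (b j) = k"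
      and ab: "\<forall>i j. holds M \<phi> (a i) (b j) \<longleftrightarrow> i < j"
      using op unfolding order_property_def by blast
    interpret ctx M \<phi> n k by unfold_locales (rule pf)
    obtain L I where I: "infinite I" and noalt: "\<forall>X. X \<subseteq> I \<and> finite X \<and> card X = L \<longrightarrow> \<not> altR a X"
      using dich[OF monster conjunct1[OF H]] a by blast
    have L0: "0 < L"
    proof (rule ccontr)
      assume "\<not> 0 < L"
      then have "L = 0" by simp
      moreover have "altR a {}" unfolding altR_def using b by blast
      ultimately show False using noalt by auto
    qed
    define e where "e = enumerate I"
    have sm: "strict_mono e" unfolding e_def using strict_mono_enumerate[OF I] .
    have rng: "range e \<subseteq> I" unfolding e_def using range_enumerate[OF I] by simp
    have inj: "inj e" by (rule strict_mono_imp_inj_on[OF sm])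
    define a' where "a' = a \<circ> e"
    define Q where "Q = type_space M \<phi> k a'"
    have noq: "\<not> altq q X" if q: "q \<in> Q" and fX: "finite X" and cX: "card X = L" for q X
    proof
      assume aq: "altq q X"
      obtain N where N: "X \<subseteq> {..<N}" using finite_nat_bounded[OF fX] by blast
      obtain b0 where b0: "length b0 = k" "\<forall>i<N. holds M \<phi> (a' i) b0 \<longleftrightarrow> q i"
        using q unfolding Q_def type_space_def by blast
      have "altR a' X" unfolding altR_def
      proof (intro exI[of _ b0] conjI ballI)
        show "length b0 = k" by (rule b0(1))
        fix j assume "j \<in> X"
        then have "j < N" using N by auto
        then show "holds M \<phi> (a' j) b0 \<longleftrightarrow> even (card {i \<in> X. i < j})"
          using b0(2) aq \<open>j \<in> X\<close> unfolding altq_def by auto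
      qed
      then have "altR a (e ` X)" using altR_mono[OF sm] by (simp add: a'_def)
      moreover have "e ` X \<subseteq> I" using rng by auto
      moreover have "finite (e ` X)" using fX by simp
      moreover have "card (e ` X) = L" using cX inj by (simp add: card_image inj_on_subset)
      ultimately show False using noalt by blast
    qed
    obtain g where conv: "\<forall>q\<in>Q. (\<lambda>i. if q i then 1 else 0) \<longlonglongrightarrow> g q"
      and dbsc: "DBSC (subtopology cantor Q) g"
      using topo[OF L0 noq] by blast
    have cp: "compact_Polish (subtopology cantor Q)"
      by (rule compact_Polish_cantor_closed) (simp add: Q_def type_space_closed)
    have Cg: "\<C> (type_space_top M \<phi> k a') g"
      unfolding type_space_top_def using C_DBSC[OF cp dbsc] by (simp add: Q_def)
    have a'len: "\<forall>i. length (a' i) = n" using a by (simp add: a'_def)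
    have ex_g: "\<exists>g. (\<forall>q\<in>type_space M \<phi> k a'. (\<lambda>i. if q i then 1 else 0) \<longlonglongrightarrow> g q) \<and>
           \<C> (type_space_top M \<phi> k a') g"
      using conv Cg by (auto simp: Q_def)
    have "\<not> (\<exists>b :: nat \<Rightarrow> 'm list. (\<forall>j. length (b j) = k) \<and> (\<forall>i j. holds M \<phi> (a' i) (b j) \<longleftrightarrow> i < j))"
      using conjunct2[OF H, unfolded is_class_def, rule_format, OF pf a'len[rule_format] ex_g] .
    moreover have "(\<forall>j. length ((b \<circ> e) j) = k) \<and> (\<forall>i j. holds M \<phi> (a' i) ((b \<circ> e) j) \<longleftrightarrow> i < j)"
      using b ab sm by (simp add: a'_def strict_mono_less)
    ultimately show False by blast
  qed
qed


end
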